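(* Let $\epsilon>0$ and let $G=(S,B,E)$ be a bipartite graph with weights $w:S\to\mathbb{R}_+$ and a fixed arrival order of $B$. Run $\epsilon$-\textsc{Ranking} with independent uniform samples $x_j\in[0,1]$, $j\in S$. Then for every edge $\{i,j\}\in E$ with $i\in B$, $j\in S$, \[ \mathbb{E}[r_j+u_i]\ge\left(1-\frac{1}{e}-\epsilon\right)w_j. \]
   Context: $\epsilon$-\textsc{Ranking}: for each $j\in S$ sample independently a uniformly random $x_j\in[0,1]$; when buyer $i$ arrives (revealing $N(i)\subseteq S$), match $i$ to an unmatched $j\in N(i)$ maximizing $w_j(1-e^{x_j-1-\epsilon})$ (leave $i$ unmatched if none exists). Revenue: $r_j=w_je^{x_j-1-\epsilon}$ if $j$ is matched at the end, and $r_j=0$ otherwise. Utility: $u_i=w_j(1-e^{x_j-1-\epsilon})$ if buyer $i$ is matched to $j$, and $u_i=0$ if $i$ is unmatched. *)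

theory Defs
  imports "HOL-Probability.Probability"
begin

definition eps_util :: "real \<Rightarrow> ('s \<Rightarrow> real) \<Rightarrow> ('s \<Rightarrow> real) \<Rightarrow> 's \<Rightarrow> real" where
  "eps_util eps w x j = w j * (1 - exp (x j - 1 - eps))"

definition eps_rev :: "real \<Rightarrow> ('s \<Rightarrow> real) \<Rightarrow> ('s \<Rightarrow> real) \<Rightarrow> 's \<Rightarrow> real" where
  "eps_rev eps w x j = w j * exp (x j - 1 - eps)"

definition eps_choose ::
  "real \<Rightarrow> ('s::linorder \<Rightarrow> real) \<Rightarrow> 's set \<Rightarrow> ('b \<times> 's) set \<Rightarrow> ('s \<Rightarrow> real)
    \<Rightarrow> 'b \<Rightarrow> ('b \<Rightarrow> 's option) \<Rightarrow> 's option" where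
  "eps_choose eps w S E x i m =
     (let C = {j \<in> S. (i, j) \<in> E \<and> j \<notin> ran m} in
      if C = {} then None
      else Some (LEAST j. j \<in> C \<and> (\<forall>k\<in>C. eps_util eps w x k \<le> eps_util eps w x j)))"

primrec eps_ranking_run ::
  "real \<Rightarrow> ('s::linorder \<Rightarrow> real) \<Rightarrow> 's set \<Rightarrow> ('b \<times> 's) set \<Rightarrow> ('s \<Rightarrow> real)
    \<Rightarrow> 'b list \<Rightarrow> ('b \<Rightarrow> 's option) \<Rightarrow> ('b \<Rightarrow> 's option)" where
  "eps_ranking_run eps w S E x [] m = m"
| "eps_ranking_run eps w S E x (i # bs) m =
     eps_ranking_run eps w S E x bs (m(i := eps_choose eps w S E x i m))"

definition eps_ranking ::
  "real \<Rightarrow> ('s::linorder \<Rightarrow> real) \<Rightarrow> 's set \<Rightarrow> ('b \<times> 's) set \<Rightarrow> ('s \<Rightarrow> real)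
    \<Rightarrow> 'b list \<Rightarrow> ('b \<Rightarrow> 's option)" where
  "eps_ranking eps w S E x bs = eps_ranking_run eps w S E x bs Map.empty"

definition revenue ::
  "real \<Rightarrow> ('s::linorder \<Rightarrow> real) \<Rightarrow> 's set \<Rightarrow> ('b \<times> 's) set \<Rightarrow> ('s \<Rightarrow> real)
    \<Rightarrow> 'b list \<Rightarrow> 's \<Rightarrow> real" where
  "revenue eps w S E x bs j =
     (if j \<in> ran (eps_ranking eps w S E x bs) then eps_rev eps w x j else 0)"

definition utility ::
  "real \<Rightarrow> ('s::linorder \<Rightarrow> real) \<Rightarrow> 's set \<Rightarrow> ('b \<times> 's) set \<Rightarrow> ('s \<Rightarrow> real)
    \<Rightarrow> 'b list \<Rightarrow> 'b \<Rightarrow> real" where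
  "utility eps w S E x bs i =
     (case eps_ranking eps w S E x bs i of None \<Rightarrow> 0 | Some k \<Rightarrow> eps_util eps w x k)"

definition sample_space :: "'s set \<Rightarrow> ('s \<Rightarrow> real) measure" where
  "sample_space S = PiM S (\<lambda>_. uniform_measure lborel {0..1})"

end

theory Submission
  imports Defs
begin


definition argm :: "('s::linorder \<Rightarrow> real) \<Rightarrow> 's set \<Rightarrow> 's" where
  "argm u C = (LEAST j. j \<in> C \<and> (\<forall>k\<in>C. u k \<le> u j))"

lemma argm_in:
  assumes "finite C" "C \<noteq> {}"
  shows "argm u C \<in> C \<and> (\<forall>k\<in>C. u k \<le> u (argm u C))"
proof -
  have "Max (u ` C) \<in> u ` C" using assms by simp
  then obtain a where a0: "a \<in> C" "u a = Max (u ` C)" by auto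
  have a: "a \<in> C" "\<forall>k\<in>C. u k \<le> u a" using assms a0 by auto
  let ?P = "\<lambda>j. j \<in> C \<and> (\<forall>k\<in>C. u k \<le> u j)"
  have f: "finite {j. ?P j}" using assms(1) by auto
  have "argm u C = Min {j. ?P j}" unfolding argm_def using Least_Min[OF f] a by blast
  moreover have "Min {j. ?P j} \<in> {j. ?P j}" using f a by (intro Min_in) auto
  ultimately show ?thesis by simp
qed

lemma argm_sub:
  assumes "finite C" "C \<noteq> {}" "C' \<subseteq> C" "argm u C \<in> C'"
  shows "argm u C' = argm u C"
proof -
  let ?a = "argm u C"
  have a: "?a \<in> C" "\<forall>k\<in>C. u k \<le> u ?a" using argm_in[OF assms(1,2)] by auto
  let ?P = "\<lambda>j. j \<in> C \<and> (\<forall>k\<in>C. u k \<le> u j)"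
  let ?Q = "\<lambda>j. j \<in> C' \<and> (\<forall>k\<in>C'. u k \<le> u j)"
  have f: "finite {j. ?P j}" using assms(1) by auto
  have fC': "finite C'" using assms(1,3) finite_subset by blast
  have f': "finite {j. ?Q j}" using fC' by auto
  have e1: "?a = Min {j. ?P j}" unfolding argm_def using Least_Min[OF f] a by blast
  have Qa: "?Q ?a" using a assms(3,4) by auto
  have e2: "argm u C' = Min {j. ?Q j}" unfolding argm_def using Least_Min[OF f'] Qa by blast
  have sub: "{j. ?Q j} \<subseteq> {j. ?P j}"
  proof
    fix y assume "y \<in> {j. ?Q j}"
    then have y: "y \<in> C'" "\<forall>k\<in>C'. u k \<le> u y" by auto
    then have "u ?a \<le> u y" using assms(4) by auto
    then show "y \<in> {j. ?P j}" using y a assms(3) by force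
  qed
  have "Min {j. ?P j} \<le> Min {j. ?Q j}" using sub f Qa by (intro Min_antimono) auto
  moreover have "Min {j. ?Q j} \<le> ?a" using f' Qa by (intro Min_le) auto
  ultimately show ?thesis using e1 e2 by simp
qed

lemma choose_eq:
  "eps_choose eps w S E x i m =
    (let C = (S - ran m) \<inter> {k. (i,k) \<in> E} in if C = {} then None else Some (argm (eps_util eps w x) C))"
proof -
  have "{j \<in> S. (i,j) \<in> E \<and> j \<notin> ran m} = (S - ran m) \<inter> {k. (i,k) \<in> E}" by auto
  then show ?thesis unfolding eps_choose_def argm_def Let_def by simp
qed

definition ut :: "('s \<Rightarrow> real) \<Rightarrow> ('b \<Rightarrow> 's option) \<Rightarrow> 'b \<Rightarrow> real" where
  "ut u m b = (case m b of None \<Rightarrow> 0 | Some k \<Rightarrow> u k)"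

definition Inv where
  "Inv S j E u rest mA mB \<longleftrightarrow> ran mA \<subseteq> S \<and> ran mB \<subseteq> S - {j} \<and>
     (\<forall>b\<in>set rest. mA b = None \<and> mB b = None) \<and>
     (S - ran mA = (S - {j}) - ran mB \<or>
       (\<exists>k. k \<notin> (S - {j}) - ran mB \<and> S - ran mA = insert k ((S - {j}) - ran mB))) \<and>
     (\<forall>b. ut u mB b \<le> ut u mA b) \<and>
     (j \<notin> ran mA \<longrightarrow> mA = mB \<and> (\<forall>b. (b,j) \<in> E \<longrightarrow> b \<in> set rest \<or> u j \<le> ut u mA b))"

lemma ran_upd_None: "m i = None \<Longrightarrow> ran (m(i := v)) = ran m \<union> set_option v"
  by (cases v) (auto simp: fun_upd_idem)

lemma InvI:
  assumes "ran mA \<subseteq> S" "ran mB \<subseteq> S - {j}"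
    "\<forall>b\<in>set rest. mA b = None \<and> mB b = None"
    "S - ran mA = (S - {j}) - ran mB \<or>
       (\<exists>k. k \<notin> (S - {j}) - ran mB \<and> S - ran mA = insert k ((S - {j}) - ran mB))"
    "\<forall>b. ut u mB b \<le> ut u mA b"
    "j \<notin> ran mA \<longrightarrow> mA = mB \<and> (\<forall>b. (b,j) \<in> E \<longrightarrow> b \<in> set rest \<or> u j \<le> ut u mA b)"
  shows "Inv S j E u rest mA mB"
  using assms unfolding Inv_def by blast

lemma inv_step:
  fixes u :: "'s::linorder \<Rightarrow> real"
  assumes fin: "finite S" and jS: "j \<in> S" and unn: "\<forall>k\<in>S. 0 \<le> u k"
    and inv: "Inv S j E u (i # rest) mA mB" and dist: "i \<notin> set rest"
    and chA: "chA = (let C = (S - ran mA) \<inter> {k. (i,k) \<in> E} in if C = {} then None else Some (argm u C))"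
    and chB: "chB = (let C = ((S - {j}) - ran mB) \<inter> {k. (i,k) \<in> E} in if C = {} then None else Some (argm u C))"
  shows "Inv S j E u rest (mA(i := chA)) (mB(i := chB))"
proof -
  define UA where "UA = S - ran mA"
  define UB where "UB = (S - {j}) - ran mB"
  define N where "N = {k. (i,k) \<in> E}"
  define CA where "CA = UA \<inter> N"
  define CB where "CB = UB \<inter> N"
  have chA': "chA = (if CA = {} then None else Some (argm u CA))" using chA by (simp add: CA_def UA_def N_def)
  have chB': "chB = (if CB = {} then None else Some (argm u CB))" using chB by (simp add: CB_def UB_def N_def)
  have ranA: "ran mA \<subseteq> S" and ranB: "ran mB \<subseteq> S - {j}"
    and rest: "\<forall>b\<in>set rest. mA b = None \<and> mB b = None"
    and iA: "mA i = None" and iB: "mB i = None"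
    and U: "UA = UB \<or> (\<exists>k. k \<notin> UB \<and> UA = insert k UB)"
    and utle: "\<forall>b. ut u mB b \<le> ut u mA b"
    and jc: "j \<notin> ran mA \<longrightarrow> mA = mB \<and> (\<forall>b. (b,j) \<in> E \<longrightarrow> b \<in> set (i#rest) \<or> u j \<le> ut u mA b)"
    using inv unfolding Inv_def UA_def UB_def by auto
  have finA: "finite CA" using fin unfolding CA_def UA_def by auto
  have finB: "finite CB" using fin unfolding CB_def UB_def by auto
  have CAS: "CA \<subseteq> S" unfolding CA_def UA_def by auto
  have CBS: "CB \<subseteq> S - {j}" unfolding CB_def UB_def by auto
  have ranA': "ran (mA(i := chA)) = ran mA \<union> set_option chA" using ran_upd_None[of mA i chA] iA by simp
  have ranB': "ran (mB(i := chB)) = ran mB \<union> set_option chB" using ran_upd_None[of mB i chB] iB by simp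
  have UA': "S - ran (mA(i := chA)) = UA - set_option chA" unfolding ranA' UA_def by auto
  have UB': "(S - {j}) - ran (mB(i := chB)) = UB - set_option chB" unfolding ranB' UB_def by auto
  have chAS: "set_option chA \<subseteq> CA" using argm_in[OF finA] chA' by auto
  have chBS: "set_option chB \<subseteq> CB" using argm_in[OF finB] chB' by auto
  have r1: "ran (mA(i := chA)) \<subseteq> S" using ranA' ranA chAS CAS by auto
  have r2: "ran (mB(i := chB)) \<subseteq> S - {j}" using ranB' ranB chBS CBS by auto
  have r3: "\<forall>b\<in>set rest. (mA(i := chA)) b = None \<and> (mB(i := chB)) b = None"
    using rest dist by auto
  have utA: "ut u (mA(i := chA)) b = (if b = i then (case chA of None \<Rightarrow> 0 | Some k \<Rightarrow> u k) else ut u mA b)" for b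
    by (simp add: ut_def)
  have utB: "ut u (mB(i := chB)) b = (if b = i then (case chB of None \<Rightarrow> 0 | Some k \<Rightarrow> u k) else ut u mB b)" for b
    by (simp add: ut_def)
  show ?thesis
  proof (cases "UA = UB")
    case True
    then have "CA = CB" unfolding CA_def CB_def by simp
    then have eq: "chA = chB" using chA' chB' by simp
    have jr: "j \<in> ran mA" using True jS unfolding UA_def UB_def by auto
    have U2: "S - ran (mA(i := chA)) = (S - {j}) - ran (mB(i := chB))"
      using UA' UB' True eq by simp
    have utle': "\<forall>b. ut u (mB(i := chB)) b \<le> ut u (mA(i := chA)) b"
      unfolding utA utB using utle eq by simp
    have last: "j \<notin> ran (mA(i := chA)) \<longrightarrow> P" for P using jr ranA' by auto
    show ?thesis by (rule InvI[OF r1 r2 r3 disjI1[OF U2] utle' last])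
  next
    case False
    then obtain k where k: "k \<notin> UB" "UA = insert k UB" using U by auto
    have CBA: "CB \<subseteq> CA" unfolding CA_def CB_def using k by auto
    have CAk: "CA \<subseteq> insert k CB" unfolding CA_def CB_def using k by auto
    have kS: "k \<in> S" using k unfolding UA_def by auto
    show ?thesis
    proof (cases "CA = {}")
      case True
      then have CB0: "CB = {}" using CBA by auto
      have e1: "chA = None" using True chA' by simp
      have e2: "chB = None" using CB0 chB' by simp
      have mA': "mA(i := chA) = mA" using e1 iA by auto
      have mB': "mB(i := chB) = mB" using e2 iB by auto
      have last: "j \<notin> ran mA \<longrightarrow> mA = mB \<and> (\<forall>b. (b,j) \<in> E \<longrightarrow> b \<in> set rest \<or> u j \<le> ut u mA b)"
      proof
        assume jn: "j \<notin> ran mA"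
        have "(i,j) \<notin> E" using jn jS True unfolding CA_def UA_def N_def by auto
        then show "mA = mB \<and> (\<forall>b. (b,j) \<in> E \<longrightarrow> b \<in> set rest \<or> u j \<le> ut u mA b)"
          using jc jn by auto
      qed
      have U2: "\<exists>k. k \<notin> (S - {j}) - ran mB \<and> S - ran mA = insert k ((S - {j}) - ran mB)"
        using k unfolding UA_def UB_def by blast
      show ?thesis unfolding mA' mB' by (rule InvI[OF ranA ranB r3[unfolded mA' mB'] disjI2[OF U2] utle last])
    next
      case CAne: False
      define a where "a = argm u CA"
      have a: "a \<in> CA" "\<forall>k\<in>CA. u k \<le> u a" using argm_in[OF finA CAne] a_def by auto
      have eA: "chA = Some a" using chA' CAne a_def by simp
      show ?thesis
      proof (cases "a = k")
        case True
        have UA'': "S - ran (mA(i := chA)) = UB" using UA' eA True k by auto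
        have U2: "S - ran (mA(i := chA)) = (S - {j}) - ran (mB(i := chB)) \<or>
           (\<exists>k. k \<notin> (S - {j}) - ran (mB(i := chB)) \<and> S - ran (mA(i := chA)) = insert k ((S - {j}) - ran (mB(i := chB))))"
        proof (cases chB)
          case None
          then show ?thesis using UA'' UB' by auto
        next
          case (Some b)
          then have "b \<in> UB" using chBS unfolding CB_def by auto
          then show ?thesis using UA'' UB' Some by auto
        qed
        have uti: "(case chB of None \<Rightarrow> 0 | Some k \<Rightarrow> u k) \<le> u a"
          using chBS CBA a unn kS True by (cases chB) auto
        have last: "j \<notin> ran (mA(i := chA)) \<longrightarrow> P" for P
        proof
          assume "j \<notin> ran (mA(i := chA))"
          then have "j \<notin> ran mA" "j \<noteq> k" using ranA' eA True by auto
          then show P using jS k unfolding UA_def UB_def by auto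
        qed
        have utle': "\<forall>b. ut u (mB(i := chB)) b \<le> ut u (mA(i := chA)) b"
          unfolding utA utB using utle eA uti by simp
        show ?thesis by (rule InvI[OF r1 r2 r3 U2 utle' last])
      next
        case False
        have aB: "a \<in> CB" using a CAk False by auto
        then have CBne: "CB \<noteq> {}" by auto
        have "argm u CB = a" using argm_sub[OF finA CAne CBA] aB a_def by simp
        then have eB: "chB = Some a" using chB' CBne by simp
        have U2: "S - ran (mA(i := chA)) = insert k ((S - {j}) - ran (mB(i := chB)))"
          "k \<notin> (S - {j}) - ran (mB(i := chB))"
          using UA' UB' eA eB k False by auto
        have last: "j \<notin> ran (mA(i := chA)) \<longrightarrow> mA(i := chA) = mB(i := chB) \<and>
           (\<forall>b. (b,j) \<in> E \<longrightarrow> b \<in> set rest \<or> u j \<le> ut u (mA(i := chA)) b)"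
        proof
          assume jn': "j \<notin> ran (mA(i := chA))"
          then have jn: "j \<notin> ran mA" using ranA' by auto
          then have eq: "mA = mB" using jc by auto
          have "u j \<le> u a" if "(i,j) \<in> E"
            using a jn jS that unfolding CA_def UA_def N_def by auto
          then show "mA(i := chA) = mB(i := chB) \<and>
           (\<forall>b. (b,j) \<in> E \<longrightarrow> b \<in> set rest \<or> u j \<le> ut u (mA(i := chA)) b)"
            using eq eA eB jc jn by (auto simp: ut_def)
        qed
        have utle': "\<forall>b. ut u (mB(i := chB)) b \<le> ut u (mA(i := chA)) b"
          unfolding utA utB using utle eA eB by simp
        have U3: "\<exists>k. k \<notin> (S - {j}) - ran (mB(i := chB)) \<and> S - ran (mA(i := chA)) = insert k ((S - {j}) - ran (mB(i := chB)))"
          using U2 by blast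
        show ?thesis by (rule InvI[OF r1 r2 r3 disjI2[OF U3] utle' last])
      qed
    qed
  qed
qed



lemma inv_run:
  assumes fin: "finite S" and jS: "j \<in> S" and unn: "\<forall>k\<in>S. 0 \<le> eps_util eps w x k"
  shows "distinct rest \<Longrightarrow> Inv S j E (eps_util eps w x) rest mA mB \<Longrightarrow>
    Inv S j E (eps_util eps w x) [] (eps_ranking_run eps w S E x rest mA) (eps_ranking_run eps w (S - {j}) E x rest mB)"
proof (induction rest arbitrary: mA mB)
  case Nil
  then show ?case by simp
next
  case (Cons i rest)
  have "Inv S j E (eps_util eps w x) rest (mA(i := eps_choose eps w S E x i mA)) (mB(i := eps_choose eps w (S - {j}) E x i mB))"
    by (rule inv_step[OF fin jS unn Cons.prems(2)]) (use Cons.prems(1) in \<open>simp_all add: choose_eq\<close>)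
  then show ?case using Cons.IH Cons.prems(1) by simp
qed

lemma inv_init:
  assumes "j \<in> S" "E \<subseteq> set bs \<times> S"
  shows "Inv S j E u bs Map.empty Map.empty"
proof -
  have "S = insert j (S - {j})" using assms by auto
  then show ?thesis unfolding Inv_def ut_def using assms by auto
qed

lemma util_nonneg:
  assumes "eps > 0" "w k \<ge> 0" "x k \<le> 1"
  shows "0 \<le> eps_util eps w x k"
proof -
  have "exp (x k - 1 - eps) \<le> 1" using assms by simp
  then show ?thesis unfolding eps_util_def using assms by simp
qed

lemma rev_nonneg: "w k \<ge> 0 \<Longrightarrow> 0 \<le> eps_rev eps w x k"
  unfolding eps_rev_def by simp

lemma utility_ut: "utility eps w S E x bs i = ut (eps_util eps w x) (eps_ranking eps w S E x bs) i"
  unfolding utility_def ut_def by simp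

lemma pointwise:
  assumes eps: "eps > 0" and fin: "finite S" and dist: "distinct bs" and ES: "E \<subseteq> set bs \<times> S"
    and ij: "(i,j) \<in> E" and w: "\<forall>k\<in>S. w k \<ge> 0" and x: "\<forall>k\<in>S. x k \<le> 1"
  shows "utility eps w (S - {j}) E x bs i +
      (if eps_util eps w x j > utility eps w (S - {j}) E x bs i then eps_rev eps w x j else 0)
    \<le> revenue eps w S E x bs j + utility eps w S E x bs i"
proof -
  define u where "u = eps_util eps w x"
  define A where "A = eps_ranking eps w S E x bs"
  define B where "B = eps_ranking eps w (S - {j}) E x bs"
  have jS: "j \<in> S" using ij ES by auto
  have unn: "\<forall>k\<in>S. 0 \<le> eps_util eps w x k"
    by (intro ballI util_nonneg) (use eps w x in auto)
  have I: "Inv S j E u [] A B"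
    unfolding A_def B_def eps_ranking_def u_def by (rule inv_run[OF fin jS unn dist inv_init[OF jS ES]])
  have le: "ut u B i \<le> ut u A i" using I unfolding Inv_def by blast
  have last: "j \<notin> ran A \<longrightarrow> A = B \<and> u j \<le> ut u A i"
    using I ij unfolding Inv_def by auto
  have uA: "utility eps w S E x bs i = ut u A i" unfolding A_def u_def by (rule utility_ut)
  have uB: "utility eps w (S - {j}) E x bs i = ut u B i" unfolding B_def u_def by (rule utility_ut)
  have rv: "revenue eps w S E x bs j = (if j \<in> ran A then eps_rev eps w x j else 0)"
    unfolding revenue_def A_def by simp
  have r0: "0 \<le> eps_rev eps w x j" using rev_nonneg[of w j eps x] w jS by simp
  show ?thesis unfolding uA uB rv u_def[symmetric]
  proof (cases "j \<in> ran A")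
    case True
    then show "ut u B i + (if u j > ut u B i then eps_rev eps w x j else 0)
      \<le> (if j \<in> ran A then eps_rev eps w x j else 0) + ut u A i" using le r0 by simp
  next
    case False
    then show "ut u B i + (if u j > ut u B i then eps_rev eps w x j else 0)
      \<le> (if j \<in> ran A then eps_rev eps w x j else 0) + ut u A i" using le last by auto
  qed
qed



definition fm :: "'a measure \<Rightarrow> ('a \<Rightarrow> 'c) \<Rightarrow> bool" where
  "fm M g \<longleftrightarrow> finite (g ` space M) \<and> (\<forall>c. g -` {c} \<inter> space M \<in> sets M)"

lemma fm_compose:
  assumes g: "fm M g" and f: "\<And>c. f c \<in> measurable M N"
  shows "(\<lambda>x. f (g x) x) \<in> measurable M N"
  unfolding measurable_def
proof (intro CollectI conjI ballI)
  show "(\<lambda>x. f (g x) x) \<in> space M \<rightarrow> space N"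
    using measurable_space[OF f] by auto
next
  fix X assume X: "X \<in> sets N"
  have "(\<lambda>x. f (g x) x) -` X \<inter> space M = (\<Union>c\<in>g ` space M. (g -` {c} \<inter> space M) \<inter> (f c -` X \<inter> space M))"
    by auto
  also have "\<dots> \<in> sets M"
    using g f[THEN measurable_sets, OF X] unfolding fm_def by (intro sets.finite_UN) auto
  finally show "(\<lambda>x. f (g x) x) -` X \<inter> space M \<in> sets M" .
qed

lemma fm_compose_fm:
  assumes g: "fm M g" and f: "\<And>c. fm M (f c)"
  shows "fm M (\<lambda>x. f (g x) x)"
  unfolding fm_def
proof (intro conjI allI)
  have "(\<lambda>x. f (g x) x) ` space M \<subseteq> (\<Union>c\<in>g ` space M. f c ` space M)" by auto
  moreover have "finite (\<Union>c\<in>g ` space M. f c ` space M)"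
    using g f unfolding fm_def by (intro finite_UN_I) blast+
  ultimately show "finite ((\<lambda>x. f (g x) x) ` space M)" by (rule finite_subset)
next
  fix d
  have "(\<lambda>x. f (g x) x) -` {d} \<inter> space M = (\<Union>c\<in>g ` space M. (g -` {c} \<inter> space M) \<inter> (f c -` {d} \<inter> space M))"
    by auto
  also have "\<dots> \<in> sets M"
    using g f unfolding fm_def by (intro sets.finite_UN) auto
  finally show "(\<lambda>x. f (g x) x) -` {d} \<inter> space M \<in> sets M" .
qed

lemma fm_const: "fm M (\<lambda>x. c)"
proof -
  have "(\<lambda>x. c) ` space M \<subseteq> {c}" by auto
  then have "finite ((\<lambda>x. c) ` space M)" using finite_subset by blast
  moreover have "(\<lambda>x. c) -` {d} \<inter> space M \<in> sets M" for d
    by (cases "c = d") (auto simp: vimage_def)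
  ultimately show ?thesis unfolding fm_def by blast
qed

lemma fm_map: "fm M g \<Longrightarrow> fm M (\<lambda>x. h (g x))"
  by (rule fm_compose_fm[of M g "\<lambda>c x. h c"]) (auto intro: fm_const)

lemma comp_meas: "(\<lambda>x. x k) \<in> borel_measurable (Pi\<^sub>M S (\<lambda>_. uniform_measure lborel {0..1::real}))"
proof (cases "k \<in> S")
  case True
  have m: "(\<lambda>x. x k) \<in> measurable (Pi\<^sub>M S (\<lambda>_. uniform_measure lborel {0..1::real})) (uniform_measure lborel {0..1::real})"
    using True by (rule measurable_component_singleton)
  have "measurable (Pi\<^sub>M S (\<lambda>_. uniform_measure lborel {0..1::real})) (uniform_measure lborel {0..1::real})
      = measurable (Pi\<^sub>M S (\<lambda>_. uniform_measure lborel {0..1::real})) borel"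
    by (rule measurable_cong_sets) (rule refl, simp only: sets_uniform_measure sets_lborel)
  then show ?thesis using m by simp
next
  case False
  have c: "(\<lambda>x. undefined :: real) \<in> borel_measurable (Pi\<^sub>M S (\<lambda>_. uniform_measure lborel {0..1::real}))"
    by (rule measurable_const) (simp only: space_borel UNIV_I)
  have xu: "x k = undefined" if "x \<in> space (Pi\<^sub>M S (\<lambda>_. uniform_measure lborel {0..1::real}))" for x
    by (rule PiE_arb[OF that[unfolded space_PiM] False])
  have iff: "((\<lambda>x. x k) \<in> borel_measurable (Pi\<^sub>M S (\<lambda>_. uniform_measure lborel {0..1::real}))) =
     ((\<lambda>x. undefined :: real) \<in> borel_measurable (Pi\<^sub>M S (\<lambda>_. uniform_measure lborel {0..1::real})))"
    using xu by (intro measurable_cong) auto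
  show ?thesis using iff c by blast
qed

lemma util_meas[measurable]: "(\<lambda>x. eps_util eps w x k) \<in> borel_measurable (sample_space S)"
  unfolding eps_util_def sample_space_def using comp_meas[of k S] by measurable

lemma rev_meas[measurable]: "(\<lambda>x. eps_rev eps w x k) \<in> borel_measurable (sample_space S)"
  unfolding eps_rev_def sample_space_def using comp_meas[of k S] by measurable

lemma argm_eq_iff:
  assumes "finite C" "C \<noteq> {}"
  shows "argm u C = c \<longleftrightarrow> c \<in> C \<and> (\<forall>k\<in>C. u k \<le> u c) \<and> (\<forall>b\<in>C. b < c \<longrightarrow> \<not> (\<forall>k\<in>C. u k \<le> u b))"
proof -
  let ?P = "\<lambda>j. j \<in> C \<and> (\<forall>k\<in>C. u k \<le> u j)"
  have f: "finite {j. ?P j}" using assms(1) by auto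
  have ex: "\<exists>j. ?P j" using argm_in[OF assms] by blast
  have e: "argm u C = Min {j. ?P j}" unfolding argm_def using Least_Min[OF f ex] .
  show ?thesis
  proof
    assume "argm u C = c"
    then have c: "c = Min {j. ?P j}" using e by simp
    have "Min {j. ?P j} \<in> {j. ?P j}" using f ex by (intro Min_in) auto
    then have "c \<in> {j. ?P j}" using c by simp
    moreover have "\<forall>b\<in>{j. ?P j}. Min {j. ?P j} \<le> b" using f by (intro ballI Min_le)
    then have "\<forall>b\<in>{j. ?P j}. c \<le> b" using c by simp
    ultimately show "c \<in> C \<and> (\<forall>k\<in>C. u k \<le> u c) \<and> (\<forall>b\<in>C. b < c \<longrightarrow> \<not> (\<forall>k\<in>C. u k \<le> u b))"
      by (auto simp: not_le[symmetric])
  next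
    assume c: "c \<in> C \<and> (\<forall>k\<in>C. u k \<le> u c) \<and> (\<forall>b\<in>C. b < c \<longrightarrow> \<not> (\<forall>k\<in>C. u k \<le> u b))"
    have "Min {j. ?P j} = c"
    proof (rule Min_eqI[OF f])
      show "c \<in> {j. ?P j}" using c by auto
      fix y assume "y \<in> {j. ?P j}" then show "c \<le> y" using c by (auto simp: not_less[symmetric])
    qed
    then show "argm u C = c" using e by simp
  qed
qed

lemma fm_argm:
  assumes "finite C" "C \<noteq> {}"
  shows "fm (sample_space S) (\<lambda>x. argm (eps_util eps w x) C)"
  unfolding fm_def
proof (intro conjI allI)
  have "(\<lambda>x. argm (eps_util eps w x) C) ` space (sample_space S) \<subseteq> C"
    using argm_in[OF assms] by auto
  then show "finite ((\<lambda>x. argm (eps_util eps w x) C) ` space (sample_space S))"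
    using assms(1) finite_subset by blast
next
  fix c
  have "(\<lambda>x. argm (eps_util eps w x) C) -` {c} \<inter> space (sample_space S) =
    {x \<in> space (sample_space S). c \<in> C \<and> (\<forall>k\<in>C. eps_util eps w x k \<le> eps_util eps w x c) \<and>
        (\<forall>b\<in>C. b < c \<longrightarrow> \<not> (\<forall>k\<in>C. eps_util eps w x k \<le> eps_util eps w x b))}"
  proof (rule set_eqI)
    fix x
    have iff: "argm (eps_util eps w x) C = c \<longleftrightarrow> c \<in> C \<and> (\<forall>k\<in>C. eps_util eps w x k \<le> eps_util eps w x c) \<and>
        (\<forall>b\<in>C. b < c \<longrightarrow> \<not> (\<forall>k\<in>C. eps_util eps w x k \<le> eps_util eps w x b))"
      by (rule argm_eq_iff[OF assms])
    show "x \<in> (\<lambda>x. argm (eps_util eps w x) C) -` {c} \<inter> space (sample_space S) \<longleftrightarrow>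
      x \<in> {x \<in> space (sample_space S). c \<in> C \<and> (\<forall>k\<in>C. eps_util eps w x k \<le> eps_util eps w x c) \<and>
        (\<forall>b\<in>C. b < c \<longrightarrow> \<not> (\<forall>k\<in>C. eps_util eps w x k \<le> eps_util eps w x b))}"
      unfolding vimage_def Int_iff mem_Collect_eq singleton_iff iff by (rule conj_commute)
  qed
  also have "\<dots> \<in> sets (sample_space S)"
  proof -
    have le: "Measurable.pred (sample_space S) (\<lambda>x. eps_util eps w x a \<le> eps_util eps w x b)" for a b
      unfolding pred_def by (rule borel_measurable_le[OF util_meas util_meas])
    have "Measurable.pred (sample_space S) (\<lambda>x. c \<in> C \<and> (\<forall>k\<in>C. eps_util eps w x k \<le> eps_util eps w x c) \<and>
        (\<forall>b\<in>C. b < c \<longrightarrow> \<not> (\<forall>k\<in>C. eps_util eps w x k \<le> eps_util eps w x b)))"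
      by (intro pred_intros_logic pred_intros_finite assms(1) le measurable_const) simp_all
    then show ?thesis unfolding pred_def .
  qed
  finally show "(\<lambda>x. argm (eps_util eps w x) C) -` {c} \<inter> space (sample_space S) \<in> sets (sample_space S)" .
qed

lemma fm_choose:
  assumes "finite S2"
  shows "fm (sample_space S) (\<lambda>x. eps_choose eps w S2 E x i m)"
proof -
  define C where "C = (S2 - ran m) \<inter> {k. (i,k) \<in> E}"
  have fC: "finite C" using assms unfolding C_def by auto
  have e: "eps_choose eps w S2 E x i m = (if C = {} then None else Some (argm (eps_util eps w x) C))" for x
    unfolding choose_eq C_def Let_def by simp
  show ?thesis
  proof (cases "C = {}")
    case True
    then show ?thesis unfolding e using fm_const by simp
  next
    case False
    then show ?thesis unfolding e using fm_map[OF fm_argm[OF fC False], where h=Some] by simp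
  qed
qed

lemma fm_run:
  assumes "finite S2"
  shows "fm (sample_space S) g \<Longrightarrow> fm (sample_space S) (\<lambda>x. eps_ranking_run eps w S2 E x bs (g x))"
proof (induction bs arbitrary: g)
  case Nil
  then show ?case by simp
next
  case (Cons i bs)
  have h: "fm (sample_space S) (\<lambda>x. c(i := eps_choose eps w S2 E x i c))" for c
    using fm_map[OF fm_choose[OF assms, where S=S and eps=eps and w=w and E=E and i=i and m=c], where h="\<lambda>v. c(i := v)"]
    by simp
  have "fm (sample_space S) (\<lambda>x. (g x)(i := eps_choose eps w S2 E x i (g x)))"
    using fm_compose_fm[OF Cons.prems, of "\<lambda>c x. c(i := eps_choose eps w S2 E x i c)", OF h] by simp
  then show ?case using Cons.IH by simp
qed

lemma utility_meas[measurable]: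
  assumes "finite S2"
  shows "(\<lambda>x. utility eps w S2 E x bs i) \<in> borel_measurable (sample_space S)"
proof -
  have g: "fm (sample_space S) (\<lambda>x. eps_ranking eps w S2 E x bs)"
    unfolding eps_ranking_def using fm_run[OF assms fm_const] .
  have f: "(\<lambda>x. case c i of None \<Rightarrow> 0 | Some k \<Rightarrow> eps_util eps w x k) \<in> borel_measurable (sample_space S)" for c
    by (cases "c i") auto
  show ?thesis unfolding utility_def using fm_compose[OF g f] .
qed

lemma revenue_meas[measurable]:
  assumes "finite S2"
  shows "(\<lambda>x. revenue eps w S2 E x bs j) \<in> borel_measurable (sample_space S)"
proof -
  have g: "fm (sample_space S) (\<lambda>x. eps_ranking eps w S2 E x bs)"
    unfolding eps_ranking_def using fm_run[OF assms fm_const] .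
  have f: "(\<lambda>x. if j \<in> ran c then eps_rev eps w x j else 0) \<in> borel_measurable (sample_space S)" for c
    by (cases "j \<in> ran c") auto
  show ?thesis unfolding revenue_def using fm_compose[OF g f] .
qed



lemma exp_int:
  fixes W e t :: real
  assumes "0 \<le> t" "0 \<le> W"
  shows "(\<integral>\<^sup>+y. ennreal (W * exp (y - e)) * indicator {0..t} y \<partial>lborel) = ennreal (W * exp (t - e) - W * exp (0 - e))"
proof -
  have d: "((\<lambda>y. W * exp (y - e)) has_vector_derivative W * exp (x - e)) (at x within {0..t})" for x
    unfolding has_real_derivative_iff_has_vector_derivative[symmetric]
    by (auto intro!: derivative_eq_intros)
  have hi: "((\<lambda>y. W * exp (y - e)) has_integral (W * exp (t - e) - W * exp (0 - e))) {0..t}"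
    using fundamental_theorem_of_calculus[OF assms(1) d] by simp
  have "(\<integral>\<^sup>+y. indicator {0..t} y * W * exp (y - e) \<partial>lborel) = W * exp (t - e) - W * exp (0 - e)"
    using nn_integral_has_integral_lebesgue[OF _ hi] assms by (simp add: mult.assoc)
  then show ?thesis
    by (simp add: indicator_mult_ennreal mult.commute mult.left_commute)
qed

lemma real_final:
  fixes W c eps t :: real
  assumes eps: "eps > 0" and W: "W > 0" and c: "c \<ge> 0"
    and t: "t = min 1 (1 + eps + ln (1 - c / W))" and cW: "c / W < 1"
  shows "(1 - 1 / exp 1 - eps) * W \<le> c + (W * exp (t - (1 + eps)) - W * exp (0 - (1 + eps)))"
proof -
  have e1: "exp (0 - (1 + eps)) \<le> exp (-1)" using eps by simp
  have e2: "exp (-1::real) = 1 / exp 1" by (simp add: exp_minus field_simps)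
  show ?thesis
  proof (cases "1 \<le> 1 + eps + ln (1 - c / W)")
    case True
    then have t1: "t = 1" using t by simp
    have a: "exp (0 - (1 + eps)) = exp (-eps) * (1 / exp 1)" by (simp add: exp_diff exp_minus field_simps)
    have b: "exp (1 - (1 + eps)) = exp (-eps)" by simp
    have "1 - eps \<le> exp (-eps)" using exp_ge_add_one_self[of "-eps"] by simp
    moreover have "0 \<le> 1 - 1 / exp (1::real)" by simp
    ultimately have "(1 - eps) * (1 - 1 / exp 1) \<le> exp (-eps) * (1 - 1 / exp 1)"
      by (rule mult_right_mono)
    moreover have "(1 - 1 / exp 1 - eps) \<le> (1 - eps) * (1 - 1 / exp 1)"
      using eps by (simp add: field_simps)
    ultimately have "(1 - 1 / exp 1 - eps) \<le> (exp (-eps) * (1 - 1 / exp 1))" by linarith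
    then have "(1 - 1 / exp 1 - eps) * W \<le> (exp (-eps) * (1 - 1 / exp 1)) * W"
      using W by (intro mult_right_mono) auto
    also have "\<dots> = W * exp (t - (1 + eps)) - W * exp (0 - (1 + eps))"
      unfolding t1 a b by (simp add: field_simps)
    finally show ?thesis using c by simp
  next
    case False
    then have t1: "t = 1 + eps + ln (1 - c / W)" using t by simp
    have pos: "0 < 1 - c / W" using cW by simp
    have "exp (t - (1 + eps)) = 1 - c / W" unfolding t1 using pos by simp
    then have "c + (W * exp (t - (1 + eps)) - W * exp (0 - (1 + eps))) = W - W * exp (0 - (1 + eps))"
      using W by (simp add: field_simps)
    moreover have "W * exp (0 - (1 + eps)) \<le> W * (1 / exp 1)"
      using e1 e2 W by (intro mult_left_mono) auto
    moreover have "(1 - 1 / exp 1 - eps) * W \<le> W - W * (1 / exp 1)"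
      using eps W by (simp add: field_simps)
    ultimately show ?thesis by linarith
  qed
qed

lemma inner_bound:
  fixes W c eps :: real
  assumes eps: "eps > 0" and W: "W \<ge> 0" and c: "c \<ge> 0"
  shows "ennreal ((1 - 1 / exp 1 - eps) * W) \<le>
    (\<integral>\<^sup>+y. ennreal (c + (if W * (1 - exp (y - 1 - eps)) > c then W * exp (y - 1 - eps) else 0)) * indicator {0..1} y \<partial>lborel)"
    (is "_ \<le> ?I")
proof -
  define g where "g y = c + (if W * (1 - exp (y - 1 - eps)) > c then W * exp (y - 1 - eps) else 0)" for y
  have gc: "c \<le> g y" for y unfolding g_def using W by simp
  have "(\<integral>\<^sup>+(y::real). ennreal c * indicator {0..1} y \<partial>lborel) = ennreal c"
    by (subst nn_integral_cmult_indicator) auto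
  moreover have "(\<integral>\<^sup>+(y::real). ennreal c * indicator {0..1} y \<partial>lborel) \<le> (\<integral>\<^sup>+y. ennreal (g y) * indicator {0..1} y \<partial>lborel)"
    using gc by (intro nn_integral_mono mult_right_mono ennreal_leI) auto
  ultimately have Ic: "ennreal c \<le> ?I" unfolding g_def by simp
  show ?thesis
  proof (cases "(1 - 1 / exp 1 - eps) * W \<le> c")
    case True
    then show ?thesis using Ic order_trans ennreal_leI by blast
  next
    case False
    then have Wp: "W > 0" using W c by (cases "W = 0") auto
    have e1: "exp (- 1 - eps) \<le> exp (-1::real)" using eps by simp
    have e2: "exp (-1::real) = 1 / exp 1" by (simp add: exp_minus field_simps)
    have "c < W * (1 - exp (-1 - eps))"
    proof -
      have "exp (-1 - eps) \<le> 1 / exp 1 + eps" using e1 e2 eps by linarith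
      then have "1 - 1 / exp 1 - eps \<le> 1 - exp (-1 - eps)" by linarith
      from mult_right_mono[OF this, of W] Wp
      have "(1 - 1 / exp 1 - eps) * W \<le> W * (1 - exp (-1 - eps))" by (simp add: mult.commute)
      then show ?thesis using False by linarith
    qed
    then have cW: "exp (-1 - eps) < 1 - c / W" using Wp by (simp add: field_simps)
    have cW1: "c / W < 1" using cW by (smt (verit) exp_gt_zero)
    have pos: "0 < 1 - c / W" using cW1 by simp
    define t where "t = min 1 (1 + eps + ln (1 - c / W))"
    have tpos: "0 < t"
    proof -
      have "ln (exp (-1 - eps)) < ln (1 - c / W)" using cW pos by (subst ln_less_cancel_iff) auto
      then show ?thesis unfolding t_def by simp
    qed
    have t1: "t \<le> 1" unfolding t_def by simp
    have key: "W * (1 - exp (y - 1 - eps)) > c" if "y < t" for y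
    proof -
      have "y - 1 - eps < ln (1 - c / W)" using that unfolding t_def by simp
      then have "exp (y - 1 - eps) < 1 - c / W" using pos by (metis exp_less_cancel_iff exp_ln)
      then show ?thesis using Wp by (simp add: field_simps)
    qed
    have pw: "ennreal c * indicator {0..1} y + ennreal (W * exp (y - (1 + eps))) * indicator {0..<t} y
        \<le> ennreal (g y) * indicator {0..1} y" for y
    proof (cases "y \<in> {0..<t}")
      case True
      then have "y \<in> {0..1}" using t1 by auto
      moreover have "g y = c + W * exp (y - (1 + eps))" using key[of y] True unfolding g_def by (auto simp: algebra_simps)
      ultimately show ?thesis using c Wp True by simp
    next
      case False
      then show ?thesis using gc c by (auto intro!: mult_right_mono ennreal_leI simp: indicator_def)
    qed
    have ae: "AE y in lborel. ennreal (W * exp (y - (1 + eps))) * indicator {0..<t} y =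
        ennreal (W * exp (y - (1 + eps))) * indicator {0..t} y"
      using AE_lborel_singleton[of t] by eventually_elim (auto simp: indicator_def)
    have "(\<integral>\<^sup>+y. ennreal c * indicator {0..1} y + ennreal (W * exp (y - (1 + eps))) * indicator {0..<t} y \<partial>lborel)
        = (\<integral>\<^sup>+(y::real). ennreal c * indicator {0..1} y \<partial>lborel) + (\<integral>\<^sup>+y. ennreal (W * exp (y - (1 + eps))) * indicator {0..<t} y \<partial>lborel)"
      by (intro nn_integral_add) auto
    also have "\<dots> = ennreal c + (\<integral>\<^sup>+y. ennreal (W * exp (y - (1 + eps))) * indicator {0..t} y \<partial>lborel)"
      using ae by (subst nn_integral_cmult_indicator) (auto intro: nn_integral_cong_AE)
    also have "\<dots> = ennreal c + ennreal (W * exp (t - (1 + eps)) - W * exp (0 - (1 + eps)))"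
      using exp_int[of t W "1 + eps"] tpos W by simp
    also have "\<dots> = ennreal (c + (W * exp (t - (1 + eps)) - W * exp (0 - (1 + eps))))"
      using c W tpos by (intro ennreal_plus[symmetric]) (auto intro!: mult_left_mono)
    finally have eqI: "(\<integral>\<^sup>+y. ennreal c * indicator {0..1} y + ennreal (W * exp (y - (1 + eps))) * indicator {0..<t} y \<partial>lborel)
       = ennreal (c + (W * exp (t - (1 + eps)) - W * exp (0 - (1 + eps))))" .
    have "ennreal ((1 - 1 / exp 1 - eps) * W) \<le> ennreal (c + (W * exp (t - (1 + eps)) - W * exp (0 - (1 + eps))))"
      by (rule ennreal_leI, rule real_final[OF eps Wp c t_def cW1])
    also have "\<dots> \<le> (\<integral>\<^sup>+y. ennreal (g y) * indicator {0..1} y \<partial>lborel)"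
      unfolding eqI[symmetric] by (intro nn_integral_mono pw)
    finally show ?thesis unfolding g_def .
  qed
qed



lemma choose_in:
  assumes "finite S2" "eps_choose eps w S2 E x i m = Some k"
  shows "k \<in> S2"
proof -
  define C where "C = (S2 - ran m) \<inter> {k. (i,k) \<in> E}"
  have fC: "finite C" using assms(1) unfolding C_def by auto
  have e: "eps_choose eps w S2 E x i m = (if C = {} then None else Some (argm (eps_util eps w x) C))"
    unfolding choose_eq C_def Let_def by simp
  have "C \<noteq> {}" "k = argm (eps_util eps w x) C" using assms(2) unfolding e by (auto split: if_splits)
  then have "k \<in> C" using argm_in[OF fC] by auto
  then show ?thesis unfolding C_def by auto
qed

lemma ran_upd_sub: "ran (m(i := v)) \<subseteq> ran m \<union> set_option v"
  by (auto simp: ran_def)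

lemma ran_run:
  assumes "finite S2"
  shows "ran m \<subseteq> S2 \<Longrightarrow> ran (eps_ranking_run eps w S2 E x bs m) \<subseteq> S2"
proof (induction bs arbitrary: m)
  case Nil
  then show ?case by simp
next
  case (Cons i bs)
  have "set_option (eps_choose eps w S2 E x i m) \<subseteq> S2"
    using choose_in[OF assms] by (cases "eps_choose eps w S2 E x i m") auto
  then have "ran (m(i := eps_choose eps w S2 E x i m)) \<subseteq> S2"
    using ran_upd_sub[of m i "eps_choose eps w S2 E x i m"] Cons.prems by blast
  then show ?case using Cons.IH by simp
qed

lemma choose_cong:
  assumes "\<forall>k\<in>S2. x k = x2 k"
  shows "eps_choose eps w S2 E x i m = eps_choose eps w S2 E x2 i m"
proof -
  define C where "C = (S2 - ran m) \<inter> {k. (i,k) \<in> E}"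
  have CS: "C \<subseteq> S2" unfolding C_def by auto
  have u: "\<forall>k\<in>C. eps_util eps w x k = eps_util eps w x2 k"
    using assms CS unfolding eps_util_def by auto
  have "argm (eps_util eps w x) C = argm (eps_util eps w x2) C"
  proof -
    have "(\<lambda>j. j \<in> C \<and> (\<forall>k\<in>C. eps_util eps w x k \<le> eps_util eps w x j)) =
          (\<lambda>j. j \<in> C \<and> (\<forall>k\<in>C. eps_util eps w x2 k \<le> eps_util eps w x2 j))"
      using u by (intro ext) auto
    then show ?thesis unfolding argm_def by simp
  qed
  then show ?thesis unfolding choose_eq C_def[symmetric] Let_def by simp
qed

lemma run_cong:
  assumes "\<forall>k\<in>S2. x k = x2 k"
  shows "eps_ranking_run eps w S2 E x bs m = eps_ranking_run eps w S2 E x2 bs m"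
proof (induction bs arbitrary: m)
  case Nil
  then show ?case by simp
next
  case (Cons i bs)
  show ?case unfolding eps_ranking_run.simps choose_cong[OF assms, of eps w E i m] by (rule Cons.IH)
qed

lemma utility_cong:
  assumes "finite S2" "\<forall>k\<in>S2. x k = x2 k"
  shows "utility eps w S2 E x bs i = utility eps w S2 E x2 bs i"
proof -
  have e: "eps_ranking eps w S2 E x bs = eps_ranking eps w S2 E x2 bs"
    unfolding eps_ranking_def by (rule run_cong[OF assms(2)])
  have r: "ran (eps_ranking eps w S2 E x2 bs) \<subseteq> S2"
    unfolding eps_ranking_def by (rule ran_run[OF assms(1)]) simp
  show ?thesis
  proof (cases "eps_ranking eps w S2 E x2 bs i")
    case None
    then show ?thesis unfolding utility_def e by simp
  next
    case (Some k)
    then have "k \<in> S2" using r by (auto simp: ran_def)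
    then show ?thesis unfolding utility_def e using Some assms(2) by (simp add: eps_util_def)
  qed
qed

lemma utility_bounds:
  assumes "finite S2" "eps > 0" "\<forall>k\<in>S2. 0 \<le> w k" "\<forall>k\<in>S2. 0 \<le> x k \<and> x k \<le> 1"
  shows "0 \<le> utility eps w S2 E x bs i \<and> utility eps w S2 E x bs i \<le> (\<Sum>k\<in>S2. w k)"
proof -
  have r: "ran (eps_ranking eps w S2 E x bs) \<subseteq> S2"
    unfolding eps_ranking_def by (rule ran_run[OF assms(1)]) simp
  show ?thesis
  proof (cases "eps_ranking eps w S2 E x bs i")
    case None
    then show ?thesis unfolding utility_def using assms(3) by (simp add: sum_nonneg)
  next
    case (Some k)
    then have k: "k \<in> S2" using r by (auto simp: ran_def)
    have "exp (x k - 1 - eps) \<le> 1" using assms k by auto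
    moreover have "0 \<le> exp (x k - 1 - eps)" by simp
    ultimately have "0 \<le> eps_util eps w x k \<and> eps_util eps w x k \<le> w k"
      unfolding eps_util_def using assms(3) k by (auto simp: mult_left_le)
    moreover have "w k \<le> (\<Sum>k\<in>S2. w k)" using k assms(1,3) by (intro member_le_sum) auto
    ultimately show ?thesis unfolding utility_def using Some by simp
  qed
qed

lemma revenue_bounds:
  assumes "finite S" "j \<in> S" "eps > 0" "\<forall>k\<in>S. 0 \<le> w k" "\<forall>k\<in>S. 0 \<le> x k \<and> x k \<le> 1"
  shows "0 \<le> revenue eps w S E x bs j \<and> revenue eps w S E x bs j \<le> (\<Sum>k\<in>S. w k)"
proof -
  have "exp (x j - 1 - eps) \<le> 1" using assms by auto
  moreover have "0 \<le> exp (x j - 1 - eps)" by simp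
  ultimately have "0 \<le> eps_rev eps w x j \<and> eps_rev eps w x j \<le> w j"
    unfolding eps_rev_def using assms by (auto simp: mult_left_le)
  moreover have "w j \<le> (\<Sum>k\<in>S. w k)" using assms by (intro member_le_sum) auto
  ultimately show ?thesis unfolding revenue_def using assms(4) by (auto simp: sum_nonneg)
qed



theorem lemma8:
  fixes eps :: real and S :: "'s::linorder set" and bs :: "'b list"
    and E :: "('b \<times> 's) set" and w :: "'s \<Rightarrow> real" and i :: 'b and j :: 's
  assumes "eps > 0"
    and "finite S"
    and "distinct bs"
    and "E \<subseteq> set bs \<times> S"
    and "\<And>k. k \<in> S \<Longrightarrow> w k \<ge> 0"
    and "(i, j) \<in> E"
  shows "(\<integral>x. revenue eps w S E x bs j + utility eps w S E x bs i \<partial>sample_space S)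
           \<ge> (1 - 1 / exp 1 - eps) * w j"
proof -
  note eps = assms(1) and fin = assms(2) and dist = assms(3) and ES = assms(4) and ij = assms(6)
  have w: "\<forall>k\<in>S. 0 \<le> w k" using assms(5) by blast
  have jS: "j \<in> S" using ij ES by auto
  define S' where "S' = S - {j}"
  have finS': "finite S'" using fin unfolding S'_def by simp
  have SS': "S = insert j S'" "j \<notin> S'" using jS unfolding S'_def by auto
  define M0 where "M0 = uniform_measure lborel {0..1::real}"
  have ss: "sample_space S = Pi\<^sub>M S (\<lambda>_. M0)" for S unfolding sample_space_def M0_def ..
  have pM0: "prob_space M0" unfolding M0_def by (rule prob_space_uniform_measure) auto
  interpret PS: product_sigma_finite "\<lambda>_::'s. M0"
    by (rule product_sigma_finite.intro) (rule prob_space_imp_sigma_finite[OF pM0])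
  have pS: "prob_space (sample_space S)" for S unfolding ss by (rule prob_space_PiM) (rule pM0)
  have AE0: "AE y in M0. 0 \<le> y \<and> y \<le> 1"
    unfolding M0_def by (rule AE_uniform_measureI) auto
  have AEall: "AE x in sample_space T. \<forall>k\<in>T. 0 \<le> x k \<and> x k \<le> 1" if "finite T" for T
    unfolding ss using that
  proof (intro AE_finite_allI)
    fix k assume "k \<in> T"
    then show "AE x in Pi\<^sub>M T (\<lambda>_. M0). 0 \<le> x k \<and> x k \<le> 1"
      using AE_PiM_component[of T "\<lambda>_. M0" k "\<lambda>y. 0 \<le> y \<and> y \<le> 1"] pM0 AE0 by blast
  qed
  define W where "W = w j"
  have W: "0 \<le> W" using w jS unfolding W_def by auto
  define K where "K = (1 - 1 / exp 1 - eps) * W"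
  define F where "F x = revenue eps w S E x bs j + utility eps w S E x bs i" for x
  define c where "c x = utility eps w S' E x bs i" for x
  define G where "G x = c x + (if eps_util eps w x j > c x then eps_rev eps w x j else 0)" for x
  have Fm: "F \<in> borel_measurable (sample_space S)"
    unfolding F_def using revenue_meas[OF fin] utility_meas[OF fin] by measurable
  have cm: "c \<in> borel_measurable (sample_space S)"
    unfolding c_def using utility_meas[OF finS'] .
  have Gm: "G \<in> borel_measurable (sample_space S)"
    unfolding G_def using cm by measurable
  define B where "B = 2 * (\<Sum>k\<in>S. w k)"
  have Fb: "AE x in sample_space S. 0 \<le> F x \<and> F x \<le> B"
    using AEall[OF fin]
  proof eventually_elim
    case (elim x)
    then show ?case unfolding F_def B_def
      using revenue_bounds[OF fin jS eps w, of x E bs] utility_bounds[OF fin eps w, of x E bs i] elim by auto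
  qed
  have FG: "AE x in sample_space S. G x \<le> F x"
    using AEall[OF fin]
  proof eventually_elim
    case (elim x)
    then show ?case unfolding F_def G_def c_def S'_def
      using pointwise[OF eps fin dist ES ij w] by auto
  qed
  have intF: "integral\<^sup>L (sample_space S) F = enn2real (\<integral>\<^sup>+x. ennreal (F x) \<partial>sample_space S)"
    by (rule integral_eq_nn_integral[OF Fm]) (use Fb in auto)
  have nnF_fin: "(\<integral>\<^sup>+x. ennreal (F x) \<partial>sample_space S) \<le> ennreal B"
  proof -
    have "(\<integral>\<^sup>+x. ennreal (F x) \<partial>sample_space S) \<le> (\<integral>\<^sup>+x. ennreal B \<partial>sample_space S)"
      by (rule nn_integral_mono_AE) (use Fb in \<open>eventually_elim, auto intro: ennreal_leI\<close>)
    also have "\<dots> = ennreal B"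
      using prob_space.emeasure_space_1[OF pS[of S]] by simp
    finally show ?thesis .
  qed
  have FGn: "(\<integral>\<^sup>+x. ennreal (G x) \<partial>sample_space S) \<le> (\<integral>\<^sup>+x. ennreal (F x) \<partial>sample_space S)"
    by (rule nn_integral_mono_AE) (use FG in \<open>eventually_elim, auto intro: ennreal_leI\<close>)
  have Gm': "(\<lambda>x. ennreal (G x)) \<in> borel_measurable (Pi\<^sub>M (insert j S') (\<lambda>_. M0))"
    using Gm unfolding ss SS'(1)[symmetric] by measurable
  have fold: "(\<integral>\<^sup>+x. ennreal (G x) \<partial>sample_space S) =
      (\<integral>\<^sup>+x. (\<integral>\<^sup>+y. ennreal (G (x(j := y))) \<partial>M0) \<partial>Pi\<^sub>M S' (\<lambda>_. M0))"
    unfolding ss SS'(1) by (rule PS.product_nn_integral_insert[OF finS' SS'(2) Gm'])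
  have inner: "AE x in Pi\<^sub>M S' (\<lambda>_. M0). ennreal K \<le> (\<integral>\<^sup>+y. ennreal (G (x(j := y))) \<partial>M0)"
    using AEall[OF finS'] unfolding ss
  proof eventually_elim
    case (elim x)
    have cx: "c (x(j := y)) = c x" for y
      unfolding c_def by (rule utility_cong[OF finS']) (use SS'(2) in auto)
    have c0: "0 \<le> c x"
      unfolding c_def using utility_bounds[OF finS' eps _ elim, of w E bs i] w unfolding S'_def by auto
    have Gx: "G (x(j := y)) = c x + (if W * (1 - exp (y - 1 - eps)) > c x then W * exp (y - 1 - eps) else 0)" for y
      unfolding G_def cx W_def eps_util_def eps_rev_def by simp
    have m: "(\<lambda>y. ennreal (c x + (if W * (1 - exp (y - 1 - eps)) > c x then W * exp (y - 1 - eps) else 0))) \<in> borel_measurable lborel"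
      by measurable
    have "(\<integral>\<^sup>+y. ennreal (G (x(j := y))) \<partial>M0) =
      (\<integral>\<^sup>+y. ennreal (c x + (if W * (1 - exp (y - 1 - eps)) > c x then W * exp (y - 1 - eps) else 0)) * indicator {0..1} y \<partial>lborel) / emeasure lborel {0..1::real}"
      unfolding Gx M0_def by (rule nn_integral_uniform_measure[OF m]) simp
    also have "\<dots> = (\<integral>\<^sup>+y. ennreal (c x + (if W * (1 - exp (y - 1 - eps)) > c x then W * exp (y - 1 - eps) else 0)) * indicator {0..1} y \<partial>lborel)"
      by (simp add: divide_ennreal_def)
    finally show ?case using inner_bound[OF eps W c0] unfolding K_def by simp
  qed
  have "ennreal K = (\<integral>\<^sup>+x. ennreal K \<partial>Pi\<^sub>M S' (\<lambda>_. M0))"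
    using prob_space.emeasure_space_1[OF pS[of S'], unfolded ss] by simp
  also have "\<dots> \<le> (\<integral>\<^sup>+x. (\<integral>\<^sup>+y. ennreal (G (x(j := y))) \<partial>M0) \<partial>Pi\<^sub>M S' (\<lambda>_. M0))"
    using inner by (rule nn_integral_mono_AE)
  finally have KF: "ennreal K \<le> (\<integral>\<^sup>+x. ennreal (F x) \<partial>sample_space S)"
    using fold FGn by simp
  have goal: "K \<le> integral\<^sup>L (sample_space S) F"
  proof (cases "K \<le> 0")
    case True
    have "0 \<le> integral\<^sup>L (sample_space S) F" by (rule integral_nonneg_AE) (use Fb in auto)
    then show ?thesis using True by simp
  next
    case False
    have B0: "0 \<le> B" unfolding B_def using w by (simp add: sum_nonneg)
    have ne: "(\<integral>\<^sup>+x. ennreal (F x) \<partial>sample_space S) \<noteq> top"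
      using nnF_fin by (metis ennreal_neq_top neq_top_trans)
    define X where "X = (\<integral>\<^sup>+x. ennreal (F x) \<partial>sample_space S)"
    have r: "ennreal (enn2real X) = X" using ne unfolding X_def ennreal_enn2real_if by simp
    have "ennreal K \<le> ennreal (enn2real X)" unfolding r unfolding X_def by (rule KF)
    then have "K \<le> enn2real X" by (subst (asm) ennreal_le_iff) auto
    then show ?thesis unfolding intF X_def .
  qed
  then show ?thesis unfolding K_def W_def F_def by simp
qed

end
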